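(* Let $\sigma$ be a primitive substitution over a finite alphabet $\mathcal{A}$ and let $(X_\sigma,T)$ be the associated subshift. Let $v\in\mathcal{L}(X_\sigma)$ and suppose its frequency is rational, $\mu_v=p_v/q_v$ written in irreducible form. Suppose that $(X_\sigma,T)$ is balanced on $v$. Then: (1) For each $a\in\mathcal{A}$ and each return word $w$ to $a$, $q_v$ divides $|\sigma^n(w)|$ for all $n$ large enough. In particular, if $aa\in\mathcal{L}_2(X_\sigma)$, then $q_v$ divides $|\sigma^n(a)|$ for all $n$ large enough. (2) Let $a\in\mathcal{A}$ and suppose there exist $b,c\in\mathcal{A}$ such that $bac\in\mathcal{L}(X_\sigma)$ and $bc\in\mathcal{L}(X_\sigma)$. Then $q_v$ divides $|\sigma^n(a)|$ for all $n$ large enough.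
   Context: A substitution $\sigma$ on a finite alphabet $\mathcal{A}$ is a non-erasing morphism of the free monoid $\mathcal{A}^*$. Its substitution matrix $M_\sigma$ has entries $M_\sigma(a,b)=|\sigma(b)|_a$ (number of occurrences of $a$ in $\sigma(b)$); $\sigma$ is primitive if some power of $M_\sigma$ has all entries positive. $X_\sigma$ is the set of $x\in\mathcal{A}^{\mathbb Z}$ such that every finite factor of $x$ is a factor of $\sigma^n(a)$ for some $a\in\mathcal{A}$, $n\in\mathbb{N}$; $T$ is the shift. $(X_\sigma,T)$ is minimal and uniquely ergodic with invariant probability measure $\mu$. $\mathcal{L}(X_\sigma)$ is the set of finite factors of elements of $X_\sigma$, $\mathcal{L}_n(X_\sigma)$ those of length $n$. The frequency of $v$ is $\mu_v=\mu([v])$ where $[v]=\{x\in X_\sigma: x_0\cdots x_{|v|-1}=v\}$. For finite words, $|w|$ is the length and $|w|_v$ the number of occurrences of $v$ in $w$. $(X_\sigma,T)$ is balanced on $v$ if there is $C_v$ with $||w|_v-|w'|_v|\le C_v$ for all $w,w'\in\mathcal{L}(X_\sigma)$ with $|w|=|w'|$. A return word to the letter $a$ is a word $w$ such that $wa\in\mathcal{L}(X_\sigma)$ and $a$ is a prefix of $wa$. *)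

theory Defs
  imports "HOL-Probability.Probability" "HOL-Library.Sublist"
begin

definition non_erasing :: "('a \<Rightarrow> 'a list) \<Rightarrow> bool" where
  "non_erasing \<sigma> \<longleftrightarrow> (\<forall>a. \<sigma> a \<noteq> [])"

definition subst_word :: "('a \<Rightarrow> 'a list) \<Rightarrow> 'a list \<Rightarrow> 'a list" where
  "subst_word \<sigma> w = concat (map \<sigma> w)"

definition subst_pow :: "('a \<Rightarrow> 'a list) \<Rightarrow> nat \<Rightarrow> 'a list \<Rightarrow> 'a list" where
  "subst_pow \<sigma> n = (subst_word \<sigma> ^^ n)"

definition occ :: "'a list \<Rightarrow> 'a list \<Rightarrow> nat" where
  "occ w v = card {i. i + length v \<le> length w \<and> take (length v) (drop i w) = v}"

definition subst_matrix :: "('a \<Rightarrow> 'a list) \<Rightarrow> 'a \<Rightarrow> 'a \<Rightarrow> nat" where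
  "subst_matrix \<sigma> a b = count_list (\<sigma> b) a"

definition mat_mult :: "('a::finite \<Rightarrow> 'a \<Rightarrow> nat) \<Rightarrow> ('a \<Rightarrow> 'a \<Rightarrow> nat) \<Rightarrow> 'a \<Rightarrow> 'a \<Rightarrow> nat" where
  "mat_mult A B a c = (\<Sum>b\<in>UNIV. A a b * B b c)"

fun mat_pow :: "('a::finite \<Rightarrow> 'a \<Rightarrow> nat) \<Rightarrow> nat \<Rightarrow> 'a \<Rightarrow> 'a \<Rightarrow> nat" where
  "mat_pow A 0 = (\<lambda>a b. if a = b then 1 else 0)"
| "mat_pow A (Suc n) = mat_mult (mat_pow A n) A"

definition primitive :: "('a::finite \<Rightarrow> 'a list) \<Rightarrow> bool" where
  "primitive \<sigma> \<longleftrightarrow> (\<exists>k\<ge>1. \<forall>a b. mat_pow (subst_matrix \<sigma>) k a b > 0)"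

definition gen_lang :: "('a \<Rightarrow> 'a list) \<Rightarrow> 'a list set" where
  "gen_lang \<sigma> = {u. \<exists>a n. sublist u (subst_pow \<sigma> n [a])}"

definition window :: "(int \<Rightarrow> 'a) \<Rightarrow> int \<Rightarrow> nat \<Rightarrow> 'a list" where
  "window x i m = map (\<lambda>k. x (i + int k)) [0..<m]"

definition Xsub :: "('a \<Rightarrow> 'a list) \<Rightarrow> (int \<Rightarrow> 'a) set" where
  "Xsub \<sigma> = {x. \<forall>i m. window x i m \<in> gen_lang \<sigma>}"

definition lang :: "('a \<Rightarrow> 'a list) \<Rightarrow> 'a list set" where
  "lang \<sigma> = {u. \<exists>x\<in>Xsub \<sigma>. \<exists>i. u = window x i (length u)}"

definition shift :: "(int \<Rightarrow> 'a) \<Rightarrow> (int \<Rightarrow> 'a)" where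
  "shift x = (\<lambda>i. x (i + 1))"

definition cyl :: "('a \<Rightarrow> 'a list) \<Rightarrow> 'a list \<Rightarrow> (int \<Rightarrow> 'a) set" where
  "cyl \<sigma> v = {x \<in> Xsub \<sigma>. window x 0 (length v) = v}"

text \<open>mu is a shift-invariant Borel probability measure on A^Z (product sigma-algebra
  of discrete sigma-algebras) concentrated on X_sigma. For primitive sigma there is exactly
  one such measure.\<close>
definition invariant_prob :: "('a \<Rightarrow> 'a list) \<Rightarrow> (int \<Rightarrow> 'a) measure \<Rightarrow> bool" where
  "invariant_prob \<sigma> \<mu> \<longleftrightarrow>
     sets \<mu> = sets (PiM (UNIV::int set) (\<lambda>_. count_space (UNIV::'a set))) \<and>
     prob_space \<mu> \<and> emeasure \<mu> (Xsub \<sigma>) = 1 \<and>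
     (\<forall>A\<in>sets \<mu>. emeasure \<mu> (shift -` A) = emeasure \<mu> A)"

definition balanced_on :: "('a \<Rightarrow> 'a list) \<Rightarrow> 'a list \<Rightarrow> bool" where
  "balanced_on \<sigma> v \<longleftrightarrow> (\<exists>C::int. \<forall>w\<in>lang \<sigma>. \<forall>w'\<in>lang \<sigma>.
      length w = length w' \<longrightarrow> \<bar>int (occ w v) - int (occ w' v)\<bar> \<le> C)"

definition return_word :: "('a \<Rightarrow> 'a list) \<Rightarrow> 'a \<Rightarrow> 'a list \<Rightarrow> bool" where
  "return_word \<sigma> a w \<longleftrightarrow> w @ [a] \<in> lang \<sigma> \<and> prefix [a] (w @ [a])"

end

theory Submission
  imports Defs
begin

lemma subst_word_append[simp]: "subst_word s (x @ y) = subst_word s x @ subst_word s y"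
  by (simp add: subst_word_def)
lemma subst_word_Nil[simp]: "subst_word s [] = []" by (simp add: subst_word_def)
lemma subst_word_Cons: "subst_word s (c # w) = s c @ subst_word s w" by (simp add: subst_word_def)

lemma subst_pow_append[simp]: "subst_pow s n (x @ y) = subst_pow s n x @ subst_pow s n y"
  by (induction n) (simp_all add: subst_pow_def)
lemma subst_pow_Nil[simp]: "subst_pow s n [] = []"
  by (induction n) (simp_all add: subst_pow_def)
lemma subst_pow_0[simp]: "subst_pow s 0 w = w" by (simp add: subst_pow_def)
lemma subst_pow_Suc: "subst_pow s (Suc n) w = subst_word s (subst_pow s n w)"
  by (simp add: subst_pow_def)
lemma subst_pow_Suc': "subst_pow s (Suc n) w = subst_pow s n (subst_word s w)"
  by (simp add: subst_pow_def funpow_Suc_right del: funpow.simps)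
lemma subst_pow_add: "subst_pow s (k + j) w = subst_pow s k (subst_pow s j w)"
  by (simp add: subst_pow_def funpow_add)
lemma subst_pow_concat: "subst_pow s n w = concat (map (\<lambda>c. subst_pow s n [c]) w)"
proof (induction w)
  case (Cons c w) then show ?case using subst_pow_append[of s n "[c]" w] by simp
qed simp
lemma subst_word_concat: "subst_word s w = concat (map s w)" by (simp add: subst_word_def)

lemma sublist_subst_pow: "sublist x y \<Longrightarrow> sublist (subst_pow s n x) (subst_pow s n y)"
  unfolding sublist_def by (metis subst_pow_append)
lemma sublist_subst_word: "sublist x y \<Longrightarrow> sublist (subst_word s x) (subst_word s y)"
  unfolding sublist_def by (metis subst_word_append)

lemma nonerasing_len: "non_erasing s \<Longrightarrow> w \<noteq> [] \<Longrightarrow> subst_pow s n w \<noteq> []"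
proof (induction n arbitrary: w)
  case (Suc n)
  then obtain c w' where "w = c # w'" by (cases w) auto
  then have "subst_word s w \<noteq> []" using Suc.prems by (auto simp: subst_word_Cons non_erasing_def)
  then show ?case using Suc by (simp add: subst_pow_Suc')
qed simp

lemma set_concat_map: "c \<in> set w \<Longrightarrow> set (f c) \<subseteq> set (concat (map f w))" by auto

lemma matpos_set: "mat_pow (subst_matrix s) n a c > 0 \<Longrightarrow> a \<in> set (subst_pow s n [c])"
proof (induction n arbitrary: a c)
  case 0 then show ?case by (auto split: if_splits)
next
  case (Suc n)
  have "0 < (\<Sum>b\<in>UNIV. mat_pow (subst_matrix s) n a b * subst_matrix s b c)"
    using Suc.prems by (simp add: mat_mult_def)
  then obtain b where b: "mat_pow (subst_matrix s) n a b * subst_matrix s b c > 0"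
    using sum.neutral[of UNIV "\<lambda>b. mat_pow (subst_matrix s) n a b * subst_matrix s b c"] by (metis (no_types, lifting) gr0I less_irrefl)
  then have 1: "a \<in> set (subst_pow s n [b])" using Suc.IH by simp
  from b have "count_list (s c) b > 0" by (simp add: subst_matrix_def)
  then have 2: "b \<in> set (s c)" by (metis count_list_0_iff gr_implies_not0)
  have "subst_pow s (Suc n) [c] = concat (map (\<lambda>d. subst_pow s n [d]) (s c))"
    by (simp add: subst_pow_Suc' subst_word_Cons subst_pow_concat[of s n "s c"])
  then show ?case using 1 2 by auto
qed

lemma prim_set:
  assumes "non_erasing s" "primitive s"
  obtains k where "k \<ge> 1" "\<And>j a c. j \<ge> k \<Longrightarrow> a \<in> set (subst_pow s j [c])"
proof -
  obtain k where k: "k \<ge> 1" "\<And>a b. mat_pow (subst_matrix s) k a b > 0"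
    using assms(2) unfolding primitive_def by blast
  have "a \<in> set (subst_pow s j [c])" if "j \<ge> k" for j a c
  proof -
    obtain d where "d \<in> set (subst_pow s (j - k) [c])"
      using nonerasing_len[OF assms(1), of "[c]" "j-k"] by (cases "subst_pow s (j - k) [c]") auto
    moreover have "subst_pow s j [c] = concat (map (\<lambda>e. subst_pow s k [e]) (subst_pow s (j - k) [c]))"
      using subst_pow_add[of s k "j-k" "[c]"] that subst_pow_concat by simp
    moreover have "a \<in> set (subst_pow s k [d])" using matpos_set k(2) by blast
    ultimately show ?thesis by auto
  qed
  then show ?thesis using that k(1) by blast
qed


lemma prim_set_ex:
  assumes "non_erasing s" "primitive s"
  shows "\<exists>k. \<forall>j a c. j \<ge> k \<longrightarrow> a \<in> set (subst_pow s j [c])"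
  using prim_set[OF assms] by metis

lemma len_concat_le: "(\<And>c. length (f c) \<le> L) \<Longrightarrow> length (concat (map f y)) \<le> L * length y"
  by (induction y) (auto simp: add_mono)

lemma decomp_prefix:
  assumes "\<And>c. length (f c) \<le> L"
  shows "prefix u (concat (map f s)) \<Longrightarrow> \<exists>y x2. u = concat (map f y) @ x2 \<and> prefix y s \<and> length x2 \<le> L"
proof (induction s arbitrary: u)
  case Nil then show ?case by auto
next
  case (Cons c s)
  from Cons.prems have "prefix u (f c @ concat (map f s))" by simp
  then consider "prefix u (f c)" | us where "u = f c @ us" "prefix us (concat (map f s))"
    unfolding prefix_append by blast
  then show ?case
  proof cases
    case 1
    then have "length u \<le> L" using assms[of c] prefix_length_le order_trans by blast
    then show ?thesis by (intro exI[of _ "[]"] exI[of _ u]) simp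
  next
    case 2
    then obtain y x2 where "us = concat (map f y) @ x2" "prefix y s" "length x2 \<le> L"
      using Cons.IH by blast
    then show ?thesis using 2 by (intro exI[of _ "c # y"] exI[of _ x2]) auto
  qed
qed

lemma decomp_suffix:
  assumes "\<And>c. length (f c) \<le> L"
  shows "suffix u (concat (map f s)) \<Longrightarrow> \<exists>x1 y. u = x1 @ concat (map f y) \<and> suffix y s \<and> length x1 \<le> L"
proof (induction s arbitrary: u rule: rev_induct)
  case Nil then show ?case by auto
next
  case (snoc c s)
  from snoc.prems have "suffix u (concat (map f s) @ f c)" by simp
  then consider "suffix u (f c)" | us where "u = us @ f c" "suffix us (concat (map f s))"
    unfolding suffix_append by blast
  then show ?case
  proof cases
    case 1
    then have "length u \<le> L" using assms[of c] suffix_length_le order_trans by blast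
    then show ?thesis by (intro exI[of _ u] exI[of _ "[]"]) simp
  next
    case 2
    then obtain y x1 where "us = x1 @ concat (map f y)" "suffix y s" "length x1 \<le> L"
      using snoc.IH by blast
    then show ?thesis using 2 by (intro exI[of _ x1] exI[of _ "y @ [c]"]) auto
  qed
qed

lemma decomp_sublist:
  assumes "\<And>c. length (f c) \<le> L" "sublist u (concat (map f s))"
  shows "\<exists>x1 y x2. u = x1 @ concat (map f y) @ x2 \<and> sublist y s \<and> length x1 \<le> L \<and> length x2 \<le> L"
proof -
  obtain ps ss where "concat (map f s) = ps @ u @ ss" using assms(2) sublist_def by blast
  then have "prefix (ps @ u) (concat (map f s))" by simp
  then obtain y x2 where y: "ps @ u = concat (map f y) @ x2" "prefix y s" "length x2 \<le> L"
    using decomp_prefix[of f L, OF assms(1)] by blast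
  then have "suffix u (concat (map f y) @ x2)" by (metis suffix_def)
  then consider "suffix u x2" | us where "u = us @ x2" "suffix us (concat (map f y))"
    unfolding suffix_append by blast
  then show ?thesis
  proof cases
    case 1
    then have "length u \<le> L" using y(3) suffix_length_le order_trans by blast
    then show ?thesis by (intro exI[of _ u] exI[of _ "[]"] exI[of _ "[]"]) simp
  next
    case 2
    then obtain x1 y' where "us = x1 @ concat (map f y')" "suffix y' y" "length x1 \<le> L"
      using decomp_suffix[of f L, OF assms(1)] by blast
    moreover have "sublist y' s" using \<open>suffix y' y\<close> y(2)
      by (meson prefix_imp_sublist sublist_order.dual_order.trans suffix_imp_sublist)
    ultimately show ?thesis using 2 y(3) by (intro exI[of _ x1] exI[of _ y'] exI[of _ x2]) auto
  qed
qed

definition maxlen :: "('a::finite \<Rightarrow> 'a list) \<Rightarrow> nat" where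
  "maxlen f = Max (range (\<lambda>c. length (f c)))"

lemma maxlen: "length (f c) \<le> maxlen f"
  unfolding maxlen_def by (rule Max_ge) auto

lemma long_contains_letter:
  fixes s :: "'a::finite \<Rightarrow> 'a list"
  assumes "non_erasing s" "primitive s"
  shows "\<exists>L. \<forall>u b N. sublist u (subst_pow s N [b]) \<and> L \<le> length u \<longrightarrow> a \<in> set u"
proof -
  obtain k where k: "k \<ge> 1" "\<And>j a c. j \<ge> k \<Longrightarrow> a \<in> set (subst_pow s j [c])"
    using prim_set[OF assms] by blast
  define f where "f = (\<lambda>c. subst_pow s k [c])"
  define B where "B = Max ((\<lambda>(N, b). length (subst_pow s N [b])) ` ({..<k} \<times> UNIV))"
  define L where "L = B + 2 * maxlen f + 1"
  have "a \<in> set u" if h: "sublist u (subst_pow s N [b])" "L \<le> length u" for u b N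
  proof (cases "N < k")
    case True
    then have "length (subst_pow s N [b]) \<le> B" unfolding B_def by (intro Max_ge) auto
    moreover have "length u \<le> length (subst_pow s N [b])" using that(1) sublist_length_le by blast
    ultimately show ?thesis using that(2) unfolding L_def by simp
  next
    case False
    then have "subst_pow s N [b] = concat (map f (subst_pow s (N - k) [b]))"
      using subst_pow_add[of s k "N - k" "[b]"] subst_pow_concat[of s k "subst_pow s (N - k) [b]"] False unfolding f_def by simp
    then obtain x1 y x2 where d: "u = x1 @ concat (map f y) @ x2" "length x1 \<le> maxlen f" "length x2 \<le> maxlen f"
      using decomp_sublist[of f "maxlen f" u "subst_pow s (N - k) [b]"] h(1) maxlen[of f] by auto
    have "y \<noteq> []"
    proof
      assume "y = []"
      then have "length u \<le> 2 * maxlen f" using d by simp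
      then show False using that(2) unfolding L_def by simp
    qed
    then obtain c where "c \<in> set y" by (cases y) auto
    then have "a \<in> set (concat (map f y))" using k(2)[of k a c] unfolding f_def by auto
    then show ?thesis using d(1) by simp
  qed
  then show ?thesis by blast
qed

lemma long_contains_image:
  fixes s :: "'a::finite \<Rightarrow> 'a list"
  assumes "non_erasing s" "primitive s"
  shows "\<exists>L. \<forall>u b N. sublist u (subst_pow s N [b]) \<and> L \<le> length u \<longrightarrow> sublist (subst_pow s m [a]) u"
proof (induction m)
  case 0
  have *: "sublist [a] u" if h: "a \<in> set u" for u
  proof -
    obtain p r where "u = p @ a # r" using split_list[of a u] h by blast
    then show ?thesis unfolding sublist_def by (intro exI[of _ p] exI[of _ r]) simp
  qed
  obtain L where "\<forall>u b N. sublist u (subst_pow s N [b]) \<and> L \<le> length u \<longrightarrow> a \<in> set u"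
    using long_contains_letter[OF assms, of a] by blast
  then show ?case using * by (intro exI[of _ L]) simp
next
  case (Suc m)
  then obtain L where L: "\<And>u b N. sublist u (subst_pow s N [b]) \<Longrightarrow> L \<le> length u \<Longrightarrow> sublist (subst_pow s m [a]) u"
    by blast
  define L' where "L' = maxlen s * L + 2 * maxlen s + 2"
  have "sublist (subst_pow s (Suc m) [a]) u" if h: "sublist u (subst_pow s N [b])" "L' \<le> length u" for u b N
  proof (cases N)
    case 0
    then have "length u \<le> length (subst_pow s N [b])" using h(1) sublist_length_le by blast
    then have "length u \<le> 1" using 0 by simp
    then show ?thesis using h(2) unfolding L'_def by simp
  next
    case (Suc N')
    then have "subst_pow s N [b] = concat (map s (subst_pow s N' [b]))"
      by (simp add: subst_pow_Suc subst_word_concat)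
    then obtain x1 y x2 where d: "u = x1 @ concat (map s y) @ x2" "sublist y (subst_pow s N' [b])"
        "length x1 \<le> maxlen s" "length x2 \<le> maxlen s"
      using decomp_sublist[of s "maxlen s" u "subst_pow s N' [b]"] h(1) maxlen[of s] by auto
    have "length (concat (map s y)) \<le> maxlen s * length y" using len_concat_le[of s "maxlen s" y] maxlen[of s] by blast
    then have "length u \<le> 2 * maxlen s + maxlen s * length y" using d by simp
    then have "maxlen s * L \<le> maxlen s * length y" using h(2) unfolding L'_def by linarith
    moreover have "maxlen s > 0"
    proof -
      obtain c :: 'a where True by simp
      have "length (s c) > 0" using assms(1) by (simp add: non_erasing_def)
      then show ?thesis using maxlen[of s c] by linarith
    qed
    ultimately have "L \<le> length y" by simp
    then have "sublist (subst_pow s m [a]) y" using L d(2) by blast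
    then have "sublist (subst_word s (subst_pow s m [a])) (subst_word s y)" by (rule sublist_subst_word)
    moreover have "sublist (concat (map s y)) u" unfolding d(1) sublist_def
      by (intro exI[of _ x1] exI[of _ x2]) simp
    ultimately show ?thesis unfolding subst_pow_Suc subst_word_concat
      by (rule sublist_order.order.trans)
  qed
  then show ?case by (intro exI[of _ L']) blast
qed

lemma length_window[simp]: "length (window x i m) = m" by (simp add: window_def)

lemma window_take_drop: "i + L \<le> n \<Longrightarrow> take L (drop i (window x j n)) = window x (j + int i) L"
  by (rule nth_equalityI) (auto simp: window_def algebra_simps)

lemma window_shift: "window (shift x) i m = window x (i + 1) m"
  by (simp add: window_def shift_def algebra_simps)

lemma lang_factor: "u \<in> lang s \<Longrightarrow> sublist w u \<Longrightarrow> w \<in> lang s"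
proof -
  assume u: "u \<in> lang s" and w: "sublist w u"
  then obtain x i where x: "x \<in> Xsub s" "u = window x i (length u)" unfolding lang_def by blast
  obtain ps ss where us: "u = ps @ w @ ss" using w sublist_def by blast
  have "w = take (length w) (drop (length ps) u)" using us by simp
  also have "\<dots> = window x (i + int (length ps)) (length w)"
  proof -
    have "length ps + length w \<le> length u" using us by simp
    then have "take (length w) (drop (length ps) (window x i (length u))) = window x (i + int (length ps)) (length w)"
      by (rule window_take_drop)
    then show ?thesis by (subst x(2), assumption)
  qed
  finally have "w = window x (i + int (length ps)) (length w)" .
  then show ?thesis using x(1) unfolding lang_def
    by (intro CollectI bexI[of _ x] exI[of _ "i + int (length ps)"])
qed

lemma lang_sub_gen: "lang s \<subseteq> gen_lang s"
proof
  fix u assume "u \<in> lang s"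
  then obtain x i where x: "x \<in> Xsub s" and eq0: "u = window x i (length u)" unfolding lang_def by blast
  have eq: "window x i (length u) = u" using eq0 by (rule sym)
  from x have "window x i (length u) \<in> gen_lang s" unfolding Xsub_def by blast
  then show "u \<in> gen_lang s" unfolding eq .
qed

lemma gen_factor: "u \<in> gen_lang s \<Longrightarrow> sublist w u \<Longrightarrow> w \<in> gen_lang s"
proof -
  assume "u \<in> gen_lang s" "sublist w u"
  then obtain a m where "sublist u (subst_pow s m [a])" unfolding gen_lang_def by blast
  then have "sublist w (subst_pow s m [a])" using \<open>sublist w u\<close> sublist_order.order.trans by blast
  then show ?thesis unfolding gen_lang_def by blast
qed

lemma gen_subst: "u \<in> gen_lang s \<Longrightarrow> subst_pow s n u \<in> gen_lang s"
proof -
  assume "u \<in> gen_lang s"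
  then obtain a m where "sublist u (subst_pow s m [a])" unfolding gen_lang_def by blast
  then have "sublist (subst_pow s n u) (subst_pow s n (subst_pow s m [a]))" by (rule sublist_subst_pow)
  then have "sublist (subst_pow s n u) (subst_pow s (n + m) [a])" by (simp add: subst_pow_add)
  then show ?thesis unfolding gen_lang_def by blast
qed

lemma gen_sub_lang:
  fixes s :: "'a::finite \<Rightarrow> 'a list"
  assumes "non_erasing s" "primitive s" "x \<in> Xsub s"
  shows "gen_lang s \<subseteq> lang s"
proof
  fix u assume "u \<in> gen_lang s"
  then obtain a m where u: "sublist u (subst_pow s m [a])" unfolding gen_lang_def by blast
  obtain L where L: "\<And>w b N. sublist w (subst_pow s N [b]) \<Longrightarrow> L \<le> length w \<Longrightarrow> sublist (subst_pow s m [a]) w"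
    using long_contains_image[OF assms(1,2), of m a] by blast
  have "window x 0 L \<in> gen_lang s" using assms(3) unfolding Xsub_def by blast
  then obtain b N where "sublist (window x 0 L) (subst_pow s N [b])" unfolding gen_lang_def by blast
  then have "sublist (subst_pow s m [a]) (window x 0 L)" using L[of "window x 0 L"] by simp
  then have "sublist u (window x 0 L)" using u sublist_order.order.trans[of u] by blast
  moreover have "window x 0 L \<in> lang s" using assms(3) unfolding lang_def
    by (intro CollectI bexI[of _ x] exI[of _ 0]) simp_all
  ultimately show "u \<in> lang s" using lang_factor by blast
qed

lemma eventually_contains:
  fixes s :: "'a::finite \<Rightarrow> 'a list"
  assumes "non_erasing s" "primitive s" "z \<in> gen_lang s"
  obtains n0 where "\<And>n a. n \<ge> n0 \<Longrightarrow> sublist z (subst_pow s n [a])"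
proof -
  obtain k where k: "\<And>j a c. j \<ge> k \<Longrightarrow> a \<in> set (subst_pow s j [c])"
    using prim_set_ex[OF assms(1,2)] by blast
  obtain b m where zb: "sublist z (subst_pow s m [b])" using assms(3) unfolding gen_lang_def by blast
  have "sublist z (subst_pow s n [a])" if "n \<ge> m + k" for n a
  proof -
    have "k \<le> n - m" using that by simp
    then have "b \<in> set (subst_pow s (n - m) [a])" by (rule k)
    then obtain p r where pr: "subst_pow s (n - m) [a] = p @ b # r" using split_list[of b] by blast
    have "subst_pow s n [a] = subst_pow s m (subst_pow s (n - m) [a])"
      using subst_pow_add[of s m "n - m" "[a]"] that by simp
    also have "\<dots> = subst_pow s m p @ subst_pow s m [b] @ subst_pow s m r"
      unfolding pr using subst_pow_append[of s m "[b]" r] by simp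
    finally have "sublist (subst_pow s m [b]) (subst_pow s n [a])" unfolding sublist_def
      by (intro exI[of _ "subst_pow s m p"] exI[of _ "subst_pow s m r"])
    then show ?thesis by (rule sublist_order.order.trans[OF zb])
  qed
  then show ?thesis by (rule that[of "m + k"])
qed

definition cnt :: "'a list \<Rightarrow> 'a list \<Rightarrow> nat \<Rightarrow> nat \<Rightarrow> nat" where
  "cnt v z i j = card {k. i \<le> k \<and> k < j \<and> k + length v \<le> length z \<and> take (length v) (drop k z) = v}"

definition FF :: "nat \<Rightarrow> nat \<Rightarrow> 'a list \<Rightarrow> 'a list \<Rightarrow> nat \<Rightarrow> nat \<Rightarrow> int" where
  "FF p q v z i j = int q * int (cnt v z i j) - int p * (int j - int i)"

lemma cnt_add:
  assumes "i \<le> j" "j \<le> k"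
  shows "cnt v z i k = cnt v z i j + cnt v z j k"
proof -
  let ?P = "\<lambda>m. m + length v \<le> length z \<and> take (length v) (drop m z) = v"
  have "{m. i \<le> m \<and> m < k \<and> ?P m} = {m. i \<le> m \<and> m < j \<and> ?P m} \<union> {m. j \<le> m \<and> m < k \<and> ?P m}"
    using assms by auto
  moreover have "card ({m. i \<le> m \<and> m < j \<and> ?P m} \<union> {m. j \<le> m \<and> m < k \<and> ?P m})
      = card {m. i \<le> m \<and> m < j \<and> ?P m} + card {m. j \<le> m \<and> m < k \<and> ?P m}"
    by (rule card_Un_disjoint) auto
  ultimately show ?thesis unfolding cnt_def by simp
qed

lemma FF_add:
  assumes "i \<le> j" "j \<le> k"
  shows "FF p q v z i k = FF p q v z i j + FF p q v z j k"
  unfolding FF_def using cnt_add[OF assms, of v z] by (simp add: algebra_simps)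

lemma cnt_shift:
  assumes "v \<noteq> []" "j + length v \<le> length z0 + 1"
  shows "cnt v (P @ z0 @ S) (length P + i) (length P + j) = cnt v z0 i j"
proof -
  let ?z = "P @ z0 @ S"
  let ?A = "{k. length P + i \<le> k \<and> k < length P + j \<and> k + length v \<le> length ?z \<and> take (length v) (drop k ?z) = v}"
  let ?B = "{k. i \<le> k \<and> k < j \<and> k + length v \<le> length z0 \<and> take (length v) (drop k z0) = v}"
  have "?A = (\<lambda>k. length P + k) ` ?B"
  proof (rule set_eqI, rule iffI)
    fix m assume m: "m \<in> ?A"
    define k where "k = m - length P"
    have mk: "m = length P + k" using m unfolding k_def by auto
    have kv: "k + length v \<le> length z0" using m assms unfolding mk by auto
    have "drop m ?z = drop k z0 @ S" unfolding mk using kv by simp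
    moreover have "take (length v) (drop m ?z) = v" using m by blast
    moreover have "take (length v) (drop k z0 @ S) = take (length v) (drop k z0)" using kv by simp
    ultimately have "take (length v) (drop k z0) = v" by simp
    then show "m \<in> (\<lambda>k. length P + k) ` ?B" using m kv unfolding mk by auto
  next
    fix m assume "m \<in> (\<lambda>k. length P + k) ` ?B"
    then obtain k where k: "k \<in> ?B" and mk: "m = length P + k" by blast
    have kv: "k + length v \<le> length z0" using k by blast
    have "drop m ?z = drop k z0 @ S" unfolding mk using k by simp
    moreover have "take (length v) (drop k z0 @ S) = take (length v) (drop k z0)" using kv by simp
    moreover have "take (length v) (drop k z0) = v" using k by blast
    ultimately have "take (length v) (drop m ?z) = v" by simp
    then show "m \<in> ?A" using k kv unfolding mk by simp
  qed
  moreover have "card ((\<lambda>k. length P + k) ` ?B) = card ?B" by (rule card_image) (simp add: inj_on_def)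
  ultimately show ?thesis unfolding cnt_def by simp
qed

lemma FF_shift:
  assumes "v \<noteq> []" "j + length v \<le> length z0 + 1"
  shows "FF p q v (P @ z0 @ S) (length P + i) (length P + j) = FF p q v z0 i j"
  unfolding FF_def cnt_shift[OF assms] by simp

lemma occ_cnt:
  assumes "v \<noteq> []" "i + (N + length v - 1) \<le> length z"
  shows "occ (take (N + length v - 1) (drop i z)) v = cnt v z i (i + N)"
proof -
  let ?L = "N + length v - 1"
  let ?u = "take ?L (drop i z)"
  have lu: "length ?u = ?L" using assms by simp
  let ?A = "{t. t + length v \<le> length ?u \<and> take (length v) (drop t ?u) = v}"
  let ?B = "{k. i \<le> k \<and> k < i + N \<and> k + length v \<le> length z \<and> take (length v) (drop k z) = v}"
  have eq: "take (length v) (drop t ?u) = take (length v) (drop (i + t) z)" if "t + length v \<le> ?L" for t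
  proof -
    have "drop t ?u = take (?L - t) (drop (i + t) z)" by (simp add: drop_take add.commute)
    then show ?thesis using that by (simp add: min_def)
  qed
  have "?B = (\<lambda>t. i + t) ` ?A"
  proof (rule set_eqI, rule iffI)
    fix m assume m: "m \<in> ?B"
    define t where "t = m - i"
    have mt: "m = i + t" using m unfolding t_def by auto
    have "t + length v \<le> ?L" using m assms(1) unfolding mt by (cases v) auto
    then show "m \<in> (\<lambda>t. i + t) ` ?A" using m eq[of t] lu unfolding mt by auto
  next
    fix m assume "m \<in> (\<lambda>t. i + t) ` ?A"
    then obtain t where t: "t \<in> ?A" and mt: "m = i + t" by blast
    have tl: "t + length v \<le> ?L" using t lu by simp
    then have "t < N" using assms(1) by (cases v) auto
    then show "m \<in> ?B" using t eq[OF tl] tl assms(2) unfolding mt by auto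
  qed
  moreover have "card ((\<lambda>t. i + t) ` ?A) = card ?A" by (rule card_image) (simp add: inj_on_def)
  ultimately show ?thesis unfolding cnt_def occ_def by simp
qed

lemma key_dvd:
  fixes p q :: nat and D :: int
  assumes v: "v \<noteq> []" and cop: "coprime p q"
    and bound0: "\<forall>z i j. z \<in> L \<longrightarrow> i \<le> j \<longrightarrow> j + length v \<le> length z + 1 \<longrightarrow> \<bar>FF p q v z i j\<bar> \<le> D"
    and ext: "\<bar>FF p q v z0 i0 j0\<bar> = D" "i0 \<le> j0" "j0 + length v \<le> length z0 + 1"
    and zL: "P @ z0 @ M @ z0 @ S \<in> L"
  shows "q dvd (length z0 + length M)"
proof -
  note bound = bound0[rule_format]
  let ?z = "P @ z0 @ M @ z0 @ S"
  define s1 where "s1 = length P"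
  define s2 where "s2 = length P + length z0 + length M"
  have j0: "j0 \<le> length z0" using ext(3) v by (cases v) auto
  have E1: "FF p q v ?z (s1 + i0) (s1 + j0) = FF p q v z0 i0 j0"
    unfolding s1_def by (rule FF_shift[OF v ext(3)])
  have z2: "?z = (P @ z0 @ M) @ z0 @ S" by simp
  have E2: "FF p q v ?z (s2 + i0) (s2 + j0) = FF p q v z0 i0 j0"
    unfolding s2_def z2 using FF_shift[OF v ext(3), where P="P @ z0 @ M" and S=S and i=i0 and p=p and q=q] by (simp add: add.assoc)
  have o1: "s1 + i0 \<le> s1 + j0" "s1 + j0 \<le> s2 + i0" "s2 + i0 \<le> s2 + j0"
    using ext(2) j0 unfolding s1_def s2_def by auto
  have len: "s2 + j0 + length v \<le> length ?z + 1" using ext(3) unfolding s2_def by simp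
  have a1: "FF p q v ?z (s1 + i0) (s2 + j0) = FF p q v ?z (s1 + i0) (s1 + j0) + FF p q v ?z (s1 + j0) (s2 + i0) + FF p q v ?z (s2 + i0) (s2 + j0)"
    using FF_add[OF o1(1) order_trans[OF o1(2) o1(3)], of p q v ?z] FF_add[OF o1(2) o1(3), of p q v ?z] by simp
  have b1: "\<bar>FF p q v ?z (s1 + i0) (s2 + j0)\<bar> \<le> D"
    using bound[OF zL _ len] o1 by simp
  have b2: "\<bar>FF p q v ?z (s1 + j0) (s2 + i0)\<bar> \<le> D"
    using bound[OF zL o1(2)] len o1(3) by simp
  have "FF p q v ?z (s1 + i0) (s1 + j0) + FF p q v ?z (s1 + j0) (s2 + i0) = 0"
    using a1 b1 b2 E1 E2 ext(1) by linarith
  moreover have "FF p q v ?z (s1 + i0) (s2 + i0) = FF p q v ?z (s1 + i0) (s1 + j0) + FF p q v ?z (s1 + j0) (s2 + i0)"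
    by (rule FF_add[OF o1(1) o1(2), of p q v ?z])
  ultimately have "FF p q v ?z (s1 + i0) (s2 + i0) = 0" by simp
  then have "int q * int (cnt v ?z (s1 + i0) (s2 + i0)) = int p * int (s2 - s1)"
    unfolding FF_def s1_def s2_def by simp
  then have "int q dvd int p * int (s2 - s1)" by (metis dvd_triv_left)
  then have "q dvd p * (s2 - s1)" by (metis of_nat_dvd_iff of_nat_mult)
  then have "q dvd (s2 - s1)" using cop by (metis coprime_commute coprime_dvd_mult_right_iff)
  then show ?thesis unfolding s1_def s2_def by simp
qed

abbreviation "PM \<equiv> PiM (UNIV::int set) (\<lambda>_. count_space (UNIV::'a set))"

lemma space_PM: "space PM = UNIV"
  by (auto simp: space_PiM PiE_def extensional_def)

lemma coord_sets: "{x. x j = c} \<in> sets PM"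
proof -
  have "(\<lambda>x. x j) \<in> measurable PM (count_space UNIV)"
    by (rule measurable_component_singleton) simp
  then have "(\<lambda>x. x j) -` {c} \<inter> space PM \<in> sets PM" by (rule measurable_sets) simp
  moreover have "(\<lambda>x. x j) -` {c} \<inter> space PM = {x. x j = c}" using space_PM by auto
  ultimately show ?thesis by simp
qed

lemma window_Suc: "window x j (Suc n) = window x j n @ [x (j + int n)]"
  by (simp add: window_def)

lemma window_sets: "{x. window x j n = w} \<in> sets PM"
proof (induction n arbitrary: w)
  case 0
  show ?case
  proof (cases "w = []")
    case True
    then have "{x. window x j 0 = w} = space PM" using space_PM by (auto simp: window_def)
    then show ?thesis by simp
  next
    case False
    then have "{x. window x j 0 = w} = {}" by (auto simp: window_def)
    then show ?thesis by simp
  qed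
next
  case (Suc n)
  show ?case
  proof (cases "w = []")
    case True
    then have "{x. window x j (Suc n) = w} = {}" by (auto simp: window_Suc)
    then show ?thesis by simp
  next
    case False
    then obtain w' c where w: "w = w' @ [c]" by (metis rev_exhaust)
    have "{x. window x j (Suc n) = w} = {x. window x j n = w'} \<inter> {x. x (j + int n) = c}"
      unfolding w window_Suc by auto
    moreover have "{x. window x j n = w'} \<inter> {x. x (j + int n) = c} \<in> sets PM"
      by (rule sets.Int[OF Suc.IH coord_sets])
    ultimately show ?thesis by simp
  qed
qed

lemma Xsub_shift: "shift x \<in> Xsub s \<longleftrightarrow> x \<in> Xsub s"
proof
  assume "shift x \<in> Xsub s"
  then have "window (shift x) (i - 1) m \<in> gen_lang s" for i m unfolding Xsub_def by blast
  then show "x \<in> Xsub s" unfolding Xsub_def window_shift by simp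
next
  assume "x \<in> Xsub s"
  then show "shift x \<in> Xsub s" unfolding Xsub_def by (simp add: window_shift)
qed

lemma occ_window:
  assumes "v \<noteq> []" "N \<ge> 1"
  shows "occ (window x 0 (N + length v - 1)) v = card {i. i < N \<and> window x (int i) (length v) = v}"
proof -
  have "{t. t + length v \<le> N + length v - 1 \<and> take (length v) (drop t (window x 0 (N + length v - 1))) = v}
      = {i. i < N \<and> window x (int i) (length v) = v}"
  proof (rule set_eqI)
    fix t
    have "t + length v \<le> N + length v - 1 \<longleftrightarrow> t < N" using assms by (cases v) auto
    moreover have "t < N \<Longrightarrow> take (length v) (drop t (window x 0 (N + length v - 1))) = window x (int t) (length v)"
      using window_take_drop[of t "length v" "N + length v - 1" x 0] assms by (cases v) auto
    ultimately show "t \<in> {t. t + length v \<le> N + length v - 1 \<and> take (length v) (drop t (window x 0 (N + length v - 1))) = v}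
      \<longleftrightarrow> t \<in> {i. i < N \<and> window x (int i) (length v) = v}" by auto
  qed
  then show ?thesis unfolding occ_def by simp
qed

lemma freq_bound:
  fixes s :: "'a::finite \<Rightarrow> 'a list" and \<mu> :: "(int \<Rightarrow> 'a) measure"
  assumes inv: "invariant_prob s \<mu>" and v: "v \<noteq> []"
    and meas: "measure \<mu> (cyl s v) = real p / real q" and q: "q > 0" and bal: "balanced_on s v"
  shows "\<exists>K. \<forall>u \<in> lang s. length v \<le> length u \<longrightarrow>
     \<bar>int q * int (occ u v) - int p * (int (length u) + 1 - int (length v))\<bar> \<le> K"
proof -
  obtain C :: int where C: "\<And>w w'. w \<in> lang s \<Longrightarrow> w' \<in> lang s \<Longrightarrow> length w = length w' \<Longrightarrow>
      \<bar>int (occ w v) - int (occ w' v)\<bar> \<le> C"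
    using bal unfolding balanced_on_def by blast
  have sets: "sets \<mu> = sets PM" and ps: "prob_space \<mu>" and X1: "emeasure \<mu> (Xsub s) = 1"
    and shinv: "\<And>A. A \<in> sets \<mu> \<Longrightarrow> emeasure \<mu> (shift -` A) = emeasure \<mu> A"
    using inv unfolding invariant_prob_def by auto
  have spc: "space \<mu> = UNIV" using sets_eq_imp_space_eq[OF sets] space_PM by simp
  have Xs: "Xsub s \<in> sets \<mu>" using X1 emeasure_notin_sets by fastforce
  define A where "A i = Xsub s \<inter> {x. window x (int i) (length v) = v}" for i :: nat
  have As: "A i \<in> sets \<mu>" for i unfolding A_def using Xs window_sets sets by auto
  have Ash: "shift -` A i = A (Suc i)" for i
    unfolding A_def by (auto simp: Xsub_shift window_shift add.commute)
  have Aem: "emeasure \<mu> (A i) = emeasure \<mu> (A 0)" for i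
  proof (induction i)
    case (Suc i) then show ?case using shinv[OF As[of i]] Ash[of i] by simp
  qed simp
  have A0: "A 0 = cyl s v" unfolding A_def cyl_def by auto
  have Ameas: "measure \<mu> (A i) = real p / real q" for i
    using Aem[of i] A0 meas unfolding measure_def by simp
  have fin: "finite_measure \<mu>" using ps prob_space.finite_measure by blast
  have AE: "AE x in \<mu>. x \<in> Xsub s"
    using prob_space.AE_prob_1[OF ps] X1 unfolding measure_def by simp
  define K where "K = int q * C"
  have "\<bar>int q * int (occ u v) - int p * (int (length u) + 1 - int (length v))\<bar> \<le> K"
    if u: "u \<in> lang s" "length v \<le> length u" for u
  proof -
    define N where "N = length u + 1 - length v"
    have N1: "N \<ge> 1" using u(2) unfolding N_def by simp
    have lu: "length u = N + length v - 1" using u(2) v unfolding N_def by (cases v) auto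
    define f where "f x = (\<Sum>i<N. indicator (A i) x :: real)" for x
    have fint: "integrable \<mu> f" unfolding f_def
      by (intro Bochner_Integration.integrable_sum integrable_real_indicator As)
        (simp add: finite_measure.emeasure_finite[OF fin] less_top[symmetric])
    have intf: "integral\<^sup>L \<mu> f = real N * (real p / real q)"
    proof -
      have "integral\<^sup>L \<mu> f = (\<Sum>i<N. integral\<^sup>L \<mu> (indicator (A i) :: _ \<Rightarrow> real))"
        unfolding f_def
        by (intro Bochner_Integration.integral_sum integrable_real_indicator As)
          (simp add: finite_measure.emeasure_finite[OF fin] less_top[symmetric])
      also have "\<dots> = (\<Sum>i<N. real p / real q)"
        using Ameas spc by (simp add: Bochner_Integration.integral_indicator)
      finally show ?thesis by simp
    qed
    have fx: "f x = real (occ (window x 0 (length u)) v)" if "x \<in> Xsub s" for x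
    proof -
      have se: "{i\<in>{..<N}. x \<in> A i} = {i. i < N \<and> window x (int i) (length v) = v}"
        unfolding A_def using that by auto
      have "f x = (\<Sum>i\<in>{i\<in>{..<N}. x \<in> A i}. 1)"
        unfolding f_def by (subst sum.inter_filter, simp, rule sum.cong, simp_all add: indicator_def)
      also have "\<dots> = real (card {i\<in>{..<N}. x \<in> A i})" by (rule real_of_card[symmetric])
      also have "\<dots> = real (card {i. i < N \<and> window x (int i) (length v) = v})" unfolding se ..
      finally show ?thesis using occ_window[OF v N1, of x] lu by simp
    qed
    have wl: "window x 0 (length u) \<in> lang s" if "x \<in> Xsub s" for x
      unfolding lang_def using that by (intro CollectI bexI[of _ x] exI[of _ 0]) simp_all
    have up: "AE x in \<mu>. f x \<le> real (occ u v) + real_of_int C"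
      using AE
    proof (rule AE_mp, intro AE_I2 impI)
      fix x assume "x \<in> Xsub s"
      then show "f x \<le> real (occ u v) + real_of_int C"
        using C[OF wl u(1)] fx by fastforce
    qed
    have lo: "AE x in \<mu>. real (occ u v) - real_of_int C \<le> f x"
      using AE
    proof (rule AE_mp, intro AE_I2 impI)
      fix x assume "x \<in> Xsub s"
      then show "real (occ u v) - real_of_int C \<le> f x"
        using C[OF wl u(1)] fx by fastforce
    qed
    have c1: "integral\<^sup>L \<mu> f \<le> real (occ u v) + real_of_int C"
      using integral_mono_AE[OF fint finite_measure.integrable_const[OF fin] up]
        prob_space.prob_space[OF ps] by simp
    have c2: "real (occ u v) - real_of_int C \<le> integral\<^sup>L \<mu> f"
      using integral_mono_AE[OF finite_measure.integrable_const[OF fin] fint lo]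
        prob_space.prob_space[OF ps] by simp
    have "\<bar>real N * (real p / real q) - real (occ u v)\<bar> \<le> real_of_int C"
      using c1 c2 intf by linarith
    then have "\<bar>real q * (real N * (real p / real q) - real (occ u v))\<bar> \<le> real q * real_of_int C"
      by (simp add: abs_mult mult_left_mono)
    then have "\<bar>real N * real p - real q * real (occ u v)\<bar> \<le> real q * real_of_int C"
      using q by (simp add: algebra_simps)
    then have "real_of_int \<bar>int N * int p - int q * int (occ u v)\<bar> \<le> real_of_int (int q * C)"
      by simp
    then have "\<bar>int N * int p - int q * int (occ u v)\<bar> \<le> int q * C"
      by (simp only: of_int_le_iff)
    moreover have "int (length u) + 1 - int (length v) = int N" unfolding N_def using u(2) by simp
    ultimately show ?thesis unfolding K_def by (simp add: abs_minus_commute algebra_simps)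
  qed
  then show ?thesis by blast
qed

lemma take_drop_sublist: "sublist (take L (drop i z)) z"
proof -
  have "z = take i z @ take L (drop i z) @ drop L (drop i z)"
    by (metis append_take_drop_id)
  then show ?thesis unfolding sublist_def by blast
qed

lemma cnt_empty: "cnt v z i i = 0" unfolding cnt_def by simp

theorem main_nonempty:
  fixes \<sigma> :: "'a::finite \<Rightarrow> 'a list" and \<mu> :: "(int \<Rightarrow> 'a) measure"
    and v :: "'a list" and p q :: nat
  assumes ne: "non_erasing \<sigma>" and pr: "primitive \<sigma>"
    and inv: "invariant_prob \<sigma> \<mu>"
    and vL: "v \<in> lang \<sigma>"
    and meas: "measure \<mu> (cyl \<sigma> v) = real p / real q" and q: "q > 0" and cop: "coprime p q"
    and bal: "balanced_on \<sigma> v" and v: "v \<noteq> []"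
  shows "\<exists>D z0 i0 j0. (\<forall>z i j. z \<in> lang \<sigma> \<longrightarrow> i \<le> j \<longrightarrow> j + length v \<le> length z + 1 \<longrightarrow> \<bar>FF p q v z i j\<bar> \<le> D)
     \<and> \<bar>FF p q v z0 i0 j0\<bar> = D \<and> i0 \<le> j0 \<and> j0 + length v \<le> length z0 + 1 \<and> z0 \<in> lang \<sigma>"
proof -
  obtain K where K: "\<And>u. u \<in> lang \<sigma> \<Longrightarrow> length v \<le> length u \<Longrightarrow>
     \<bar>int q * int (occ u v) - int p * (int (length u) + 1 - int (length v))\<bar> \<le> K"
    using freq_bound[OF inv v meas q bal] by blast
  have K0: "K \<ge> 0" using K[OF vL] by linarith
  have FFb: "\<bar>FF p q v z i j\<bar> \<le> K" if z: "z \<in> lang \<sigma>" "i \<le> j" "j + length v \<le> length z + 1" for z i j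
  proof (cases "i = j")
    case True then show ?thesis using K0 unfolding FF_def by (simp add: cnt_empty)
  next
    case False
    define N where "N = j - i"
    define u where "u = take (N + length v - 1) (drop i z)"
    have jN: "j = i + N" using z(2) unfolding N_def by simp
    have N1: "N \<ge> 1" using False z(2) unfolding N_def by simp
    have le: "i + (N + length v - 1) \<le> length z" using z(3) v N1 unfolding jN by (cases v) auto
    have uL: "u \<in> lang \<sigma>" unfolding u_def using lang_factor[OF z(1) take_drop_sublist] .
    have lu: "length u = N + length v - 1" unfolding u_def using le by simp
    have lvu: "length v \<le> length u" using lu N1 by simp
    have oc: "occ u v = cnt v z i j" unfolding u_def jN by (rule occ_cnt[OF v le])
    have "int (length u) + 1 - int (length v) = int N" using lu N1 v by (cases v) auto
    then have "FF p q v z i j = int q * int (occ u v) - int p * (int (length u) + 1 - int (length v))"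
      unfolding FF_def oc jN by simp
    then show ?thesis using K[OF uL lvu] by simp
  qed
  define S where "S = {nat \<bar>FF p q v z i j\<bar> | z i j. z \<in> lang \<sigma> \<and> i \<le> j \<and> j + length v \<le> length z + 1}"
  have Sb: "\<forall>d\<in>S. d \<le> nat K" unfolding S_def using FFb by (auto intro: nat_mono)
  then have Sfin: "finite S" using finite_nat_set_iff_bounded_le by blast
  have "nat \<bar>FF p q v v 0 0\<bar> \<in> S" unfolding S_def using vL by force
  then have Sne: "S \<noteq> {}" by blast
  have "Max S \<in> S" using Sfin Sne by (rule Max_in)
  then obtain z0 i0 j0 where z0: "Max S = nat \<bar>FF p q v z0 i0 j0\<bar>" "z0 \<in> lang \<sigma>" "i0 \<le> j0" "j0 + length v \<le> length z0 + 1"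
    unfolding S_def by blast
  have "\<bar>FF p q v z i j\<bar> \<le> \<bar>FF p q v z0 i0 j0\<bar>" if "z \<in> lang \<sigma>" "i \<le> j" "j + length v \<le> length z + 1" for z i j
  proof -
    have "nat \<bar>FF p q v z i j\<bar> \<in> S" unfolding S_def using that by blast
    then have "nat \<bar>FF p q v z i j\<bar> \<le> nat \<bar>FF p q v z0 i0 j0\<bar>" using Max_ge[OF Sfin] z0(1) by metis
    then show ?thesis by simp
  qed
  then show ?thesis using z0 by blast
qed

theorem theorem1p2:
  fixes \<sigma> :: "'a::finite \<Rightarrow> 'a list" and \<mu> :: "(int \<Rightarrow> 'a) measure"
    and v :: "'a list" and p q :: nat
  assumes "non_erasing \<sigma>" and "primitive \<sigma>"
    and "invariant_prob \<sigma> \<mu>"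
    and "v \<in> lang \<sigma>"
    and "measure \<mu> (cyl \<sigma> v) = real p / real q" and "q > 0" and "coprime p q"
    and "balanced_on \<sigma> v"
  shows "(\<forall>a w. return_word \<sigma> a w \<longrightarrow>
            (\<exists>N. \<forall>n\<ge>N. q dvd length (subst_pow \<sigma> n w)))
       \<and> (\<forall>a. [a, a] \<in> lang \<sigma> \<longrightarrow> (\<exists>N. \<forall>n\<ge>N. q dvd length (subst_pow \<sigma> n [a])))
       \<and> (\<forall>a b c. [b, a, c] \<in> lang \<sigma> \<and> [b, c] \<in> lang \<sigma> \<longrightarrow>
            (\<exists>N. \<forall>n\<ge>N. q dvd length (subst_pow \<sigma> n [a])))"
proof -
  note ne = assms(1) and pr = assms(2) and inv = assms(3) and vL = assms(4) and meas = assms(5)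
    and q = assms(6) and cop = assms(7) and bal = assms(8)
  have X1: "emeasure \<mu> (Xsub \<sigma>) = 1" using inv unfolding invariant_prob_def by auto
  then obtain x0 where x0: "x0 \<in> Xsub \<sigma>" by fastforce
  have gl: "gen_lang \<sigma> = lang \<sigma>" using gen_sub_lang[OF ne pr x0] lang_sub_gen by blast
  show ?thesis
  proof (cases "v = []")
    case True
    have "cyl \<sigma> v = Xsub \<sigma>" unfolding cyl_def True by (auto simp: window_def)
    then have "measure \<mu> (cyl \<sigma> v) = 1" using X1 unfolding measure_def by simp
    then have "real p = real q" using meas q by (simp add: field_simps)
    then have "p = q" by simp
    then have "q = 1" using cop by simp
    then show ?thesis by auto
  next
    case False
    then have v: "v \<noteq> []" .
    obtain D z0 i0 j0 where bound: "\<forall>z i j. z \<in> lang \<sigma> \<longrightarrow> i \<le> j \<longrightarrow> j + length v \<le> length z + 1 \<longrightarrow> \<bar>FF p q v z i j\<bar> \<le> D"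
      and ext: "\<bar>FF p q v z0 i0 j0\<bar> = D" "i0 \<le> j0" "j0 + length v \<le> length z0 + 1" and z0L: "z0 \<in> lang \<sigma>"
      using main_nonempty[OF ne pr inv vL meas q cop bal v] by blast
    have z0g: "z0 \<in> gen_lang \<sigma>" using z0L gl by simp
    obtain n0 where n0: "\<And>n a. n \<ge> n0 \<Longrightarrow> sublist z0 (subst_pow \<sigma> n [a])"
      using eventually_contains[OF ne pr z0g] by blast
    note key = key_dvd[OF v cop bound ext]
    have P1: "q dvd length (subst_pow \<sigma> n w)" if rw: "return_word \<sigma> a w" and n: "n \<ge> n0" for a w n
    proof (cases w)
      case Nil then show ?thesis by simp
    next
      case (Cons a' w')
      have wa: "w @ [a] \<in> lang \<sigma>" using rw unfolding return_word_def by blast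
      have "a' = a" using rw Cons unfolding return_word_def by simp
      then have w: "w = a # w'" using Cons by simp
      obtain P R where PR: "subst_pow \<sigma> n [a] = P @ z0 @ R" using n0[OF n, of a] unfolding sublist_def by blast
      have "subst_pow \<sigma> n (w @ [a]) \<in> lang \<sigma>" using gen_subst[of "w @ [a]" \<sigma> n] wa gl by simp
      moreover have "subst_pow \<sigma> n (w @ [a]) = P @ z0 @ (R @ subst_pow \<sigma> n w' @ P) @ z0 @ R"
        unfolding w using subst_pow_append[of \<sigma> n "[a]" "w' @ [a]"] PR by simp
      ultimately have "P @ z0 @ (R @ subst_pow \<sigma> n w' @ P) @ z0 @ R \<in> lang \<sigma>" by simp
      then have "q dvd length z0 + length (R @ subst_pow \<sigma> n w' @ P)" by (rule key)
      moreover have "length (subst_pow \<sigma> n w) = length z0 + length (R @ subst_pow \<sigma> n w' @ P)"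
        unfolding w using subst_pow_append[of \<sigma> n "[a]" "w'"] PR by simp
      ultimately show ?thesis by simp
    qed
    have part1: "\<forall>a w. return_word \<sigma> a w \<longrightarrow> (\<exists>N. \<forall>n\<ge>N. q dvd length (subst_pow \<sigma> n w))"
      using P1 by blast
    have part2: "\<forall>a. [a, a] \<in> lang \<sigma> \<longrightarrow> (\<exists>N. \<forall>n\<ge>N. q dvd length (subst_pow \<sigma> n [a]))"
    proof (intro allI impI)
      fix a assume "[a, a] \<in> lang \<sigma>"
      then have "return_word \<sigma> a [a]" unfolding return_word_def by simp
      then show "\<exists>N. \<forall>n\<ge>N. q dvd length (subst_pow \<sigma> n [a])" using P1 by blast
    qed
    have part3: "\<forall>a b c. [b, a, c] \<in> lang \<sigma> \<and> [b, c] \<in> lang \<sigma> \<longrightarrow>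
            (\<exists>N. \<forall>n\<ge>N. q dvd length (subst_pow \<sigma> n [a]))"
    proof (intro allI impI exI[of _ n0])
      fix a b c n assume h: "[b, a, c] \<in> lang \<sigma> \<and> [b, c] \<in> lang \<sigma>" and n: "n0 \<le> n"
      obtain P1 R1 where PR1: "subst_pow \<sigma> n [b] = P1 @ z0 @ R1" using n0[OF n, of b] unfolding sublist_def by blast
      obtain P2 R2 where PR2: "subst_pow \<sigma> n [c] = P2 @ z0 @ R2" using n0[OF n, of c] unfolding sublist_def by blast
      have e1: "subst_pow \<sigma> n [b, a, c] = subst_pow \<sigma> n [b] @ subst_pow \<sigma> n [a] @ subst_pow \<sigma> n [c]"
        using subst_pow_append[of \<sigma> n "[b]" "[a, c]"] subst_pow_append[of \<sigma> n "[a]" "[c]"] by simp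
      have e2: "subst_pow \<sigma> n [b, c] = subst_pow \<sigma> n [b] @ subst_pow \<sigma> n [c]"
        using subst_pow_append[of \<sigma> n "[b]" "[c]"] by simp
      have "subst_pow \<sigma> n [b, a, c] \<in> lang \<sigma>" using gen_subst[of "[b, a, c]" \<sigma> n] h gl by simp
      then have "P1 @ z0 @ (R1 @ subst_pow \<sigma> n [a] @ P2) @ z0 @ R2 \<in> lang \<sigma>" using e1 PR1 PR2 by simp
      then have d1: "q dvd length z0 + length (R1 @ subst_pow \<sigma> n [a] @ P2)" by (rule key)
      have "subst_pow \<sigma> n [b, c] \<in> lang \<sigma>" using gen_subst[of "[b, c]" \<sigma> n] h gl by simp
      then have "P1 @ z0 @ (R1 @ P2) @ z0 @ R2 \<in> lang \<sigma>" using e2 PR1 PR2 by simp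
      then have d2: "q dvd length z0 + length (R1 @ P2)" by (rule key)
      have "length z0 + length (R1 @ subst_pow \<sigma> n [a] @ P2) = (length z0 + length (R1 @ P2)) + length (subst_pow \<sigma> n [a])"
        by simp
      then show "q dvd length (subst_pow \<sigma> n [a])" using d1 d2 by (metis dvd_add_right_iff)
    qed
    show ?thesis using part1 part2 part3 by blast
  qed
qed

end
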